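(* Let $\lambda=(\lambda_{m,s})_{m\in[M],s\in[S]}\in\Lambda$. Consider any scheduling policy (possibly using knowledge of arrival statistics, past and future arrivals, and past configurations) that at each slot $t$ chooses job service configurations $N^l(t)\in\mathcal N^l$ for all $l\in[L]$ and keeps the system stable, i.e. $\lim_{t\to\infty}\sum_{m,s}\mathbb E[Q_{m,s}(t)]<\infty$. Then its long-run average cost satisfies $$\liminf_{T\to\infty}\frac1T\sum_{t=1}^{T}\mathbb E\Big[\sum_{l\in[L]}\big(V\,C_1^l(N^l(t))+U\,C_2^l(N^l(t-1),N^l(t))\big)\Big]\ \ge\ C_{\mathrm{opt}}(\lambda),$$ where $C_{\mathrm{opt}}(\lambda)$ is the optimal value of $$\min_{(\lambda^l)_{l},\,P,\,\pi}\ \sum_{l\in[L]}\Big(V\,C^l_{\pi^l,1}+U\,C^l_{P^l,\pi^l,2}\Big)$$ subject to: $\lambda^l=(\lambda^l_{m,s})$ nonnegative with $\sum_l\lambda^l=\lambda$; for each $l$, $\pi^l$ is a probability distribution on $\mathcal N^l$ and $P^l$ is a stochastic matrix indexed by $\mathcal N^l\times\mathcal N^l$ with $\pi^lP^l=\pi^l$; and $\sum_s s\lambda^l_{m,s}\le\sum_{N\in\mathcal N^l}\pi^l_N\sum_s N_{m,s}$ for all $l,m$. Here $$C^l_{\pi^l,1}=\sum_{N\in\mathcal N^l}\pi^l_N\Big(c_0\mathbb 1_{\{N\neq0\}}+\sum_m c_m\sum_s N_{m,s}\Big),\qquad C^l_{P^l,\pi^l,2}=\sum_{N\in\mathcal N^l}\pi^l_N\sum_{N'\in\mathcal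 N^l}P^l_{N,N'}\sum_{m,\,s\ge2}\big[N_{m,s}-N'_{m,s-1}\big]^+.$$
   Context: Cloud system: $L$ servers, $M$ VM types, $K$ resource types. Server $l$ has $C_{l,k}$ units of resource $k$; a type-$m$ VM needs $R_{m,k}$ units of resource $k$. $\mathcal W^l=\{\eta\in\mathbb Z_{\ge0}^M:\sum_m\eta_mR_{m,k}\le C_{l,k}\ \forall k\}$ is the set of feasible VM configurations at server $l$. Time is slotted. A type-$(m,s)$ job requires a type-$m$ VM for $s$ slots, $s\in[S]$ ($S$ = maximum job size). A job service configuration at server $l$ is a matrix $N=(N_{m,s})_{m\in[M],s\in[S]}$ of nonnegative integers ($N_{m,s}$ = number of VMs given to type-$(m,s)$ jobs) with $(\sum_sN_{m,s})_m\in\mathcal W^l$; $\mathcal N^l$ is the set of these. $A_{m,s}(t)$ = number of type-$(m,s)$ arrivals in slot $t$; these are i.i.d. across slots, bounded by $A_{\max}$, with $\mathbb E[A_{m,s}(t)]=\lambda_{m,s}$ and $\Pr(A_{m,s}(t)=0)>0$. $Q_{m,s}(t)$ = number of type-$(m,s)$ jobs in the system; a type-$(m,s)$ job served in slot $t$ becomes a type-$(m,s-1)$ job at $t+1$ (and leaves if $s=1$). Capacity region: $\Lambda$ is the set of $\lambda$ such that for every $l$ there are $\beta^l_W\ge0$, $W\in\mathcal W^l$, $\sum_{W}\beta^l_W=1$, with $\sum_s s\lambda_{m,s}=\sum_l\sum_{W\in\mathcal W^l}\beta^l_WW_m$ for all $m$. Costs: given constants $c_0\ge0$ (static power) and $c_m\ge0$,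 the server running cost is $C_1^l(N)=c_0\mathbb 1_{\{N\ne0\}}+\sum_m c_m\sum_sN_{m,s}$; the (online) job migration cost is $C_2^l(N,N')=\sum_{m}\sum_{s\ge2}(N_{m,s}-N'_{m,s-1})^+$ for consecutive configurations $N$ (slot $t-1$) and $N'$ (slot $t$). $U,V\ge0$ are weighting parameters. *)

theory Defs
  imports "HOL-Probability.Probability"
begin

text \<open>VM types are indexed by m in {..<M}, resource types by k in {..<K},
servers by l in {..<L}, job sizes by s in {1..S}. A VM configuration is a function
nat => nat (zero outside {..<M}); a job service configuration is a function
nat => nat => nat, N m s, zero outside {..<M} x {1..S}.\<close>

type_synonym vmconf = "nat \<Rightarrow> nat"
type_synonym jobconf = "nat \<Rightarrow> nat \<Rightarrow> nat"

definition Wset :: "nat \<Rightarrow> nat \<Rightarrow> (nat \<Rightarrow> nat \<Rightarrow> real) \<Rightarrow> (nat \<Rightarrow> nat \<Rightarrow> real) \<Rightarrow> nat \<Rightarrow> vmconf set" where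
  "Wset M K R C l = {\<eta>. (\<forall>m. M \<le> m \<longrightarrow> \<eta> m = 0) \<and>
      (\<forall>k<K. (\<Sum>m<M. real (\<eta> m) * R m k) \<le> C l k)}"

definition Nset :: "nat \<Rightarrow> nat \<Rightarrow> nat \<Rightarrow> (nat \<Rightarrow> nat \<Rightarrow> real) \<Rightarrow> (nat \<Rightarrow> nat \<Rightarrow> real) \<Rightarrow> nat \<Rightarrow> jobconf set" where
  "Nset M S K R C l = {N. (\<forall>m s. (M \<le> m \<or> s < 1 \<or> S < s) \<longrightarrow> N m s = 0) \<and>
      (\<lambda>m. \<Sum>s\<in>{1..S}. N m s) \<in> Wset M K R C l}"

definition cost1 :: "real \<Rightarrow> (nat \<Rightarrow> real) \<Rightarrow> nat \<Rightarrow> nat \<Rightarrow> jobconf \<Rightarrow> real" where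
  "cost1 c0 c M S N = c0 * (if N \<noteq> (\<lambda>_ _. 0) then 1 else 0)
      + (\<Sum>m<M. c m * real (\<Sum>s\<in>{1..S}. N m s))"

text \<open>Job migration cost C_2(N, N') for consecutive configurations N (slot t-1), N' (slot t).\<close>
definition cost2 :: "nat \<Rightarrow> nat \<Rightarrow> jobconf \<Rightarrow> jobconf \<Rightarrow> real" where
  "cost2 M S N N' = (\<Sum>m<M. \<Sum>s\<in>{2..S}. max 0 (real (N m s) - real (N' m (s - 1))))"

definition capacity_region :: "nat \<Rightarrow> nat \<Rightarrow> nat \<Rightarrow> nat \<Rightarrow> (nat \<Rightarrow> nat \<Rightarrow> real) \<Rightarrow> (nat \<Rightarrow> nat \<Rightarrow> real) \<Rightarrow> (nat \<Rightarrow> nat \<Rightarrow> real) set" where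
  "capacity_region L M S K R C = {lam. \<exists>\<beta> :: nat \<Rightarrow> vmconf \<Rightarrow> real.
      (\<forall>l<L. (\<forall>W\<in>Wset M K R C l. 0 \<le> \<beta> l W) \<and> (\<Sum>W\<in>Wset M K R C l. \<beta> l W) = 1) \<and>
      (\<forall>m<M. (\<Sum>s\<in>{1..S}. real s * lam m s) = (\<Sum>l<L. \<Sum>W\<in>Wset M K R C l. \<beta> l W * real (W m)))}"

text \<open>A t = arrivals in slot t, Nf l t = configuration
of server l in slot t. Q(0) = A(0) (system initially empty, slot-0 arrivals present);
D = number of type-(m,s) jobs served in slot t; served type-(m,s) jobs become type-(m,s-1)
jobs at t+1 (and leave if s = 1).\<close>
fun queue :: "nat \<Rightarrow> (nat \<Rightarrow> jobconf) \<Rightarrow> (nat \<Rightarrow> nat \<Rightarrow> jobconf) \<Rightarrow> nat \<Rightarrow> jobconf" where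
  "queue L A Nf 0 = (\<lambda>m s. if s = 0 then 0 else A 0 m s)"
| "queue L A Nf (Suc t) = (\<lambda>m s. if s = 0 then 0 else
      queue L A Nf t m s - min (queue L A Nf t m s) (\<Sum>l<L. Nf l t m s)
      + min (queue L A Nf t m (Suc s)) (\<Sum>l<L. Nf l t m (Suc s))
      + A (Suc t) m s)"

definition opt_feasible :: "nat \<Rightarrow> nat \<Rightarrow> nat \<Rightarrow> nat \<Rightarrow> (nat \<Rightarrow> nat \<Rightarrow> real) \<Rightarrow> (nat \<Rightarrow> nat \<Rightarrow> real)
    \<Rightarrow> (nat \<Rightarrow> nat \<Rightarrow> real) \<Rightarrow> (nat \<Rightarrow> nat \<Rightarrow> nat \<Rightarrow> real) \<Rightarrow> (nat \<Rightarrow> jobconf \<Rightarrow> real)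
    \<Rightarrow> (nat \<Rightarrow> jobconf \<Rightarrow> jobconf \<Rightarrow> real) \<Rightarrow> bool" where
  "opt_feasible L M S K R C lam lamL \<pi> P \<longleftrightarrow>
     (\<forall>l<L. \<forall>m<M. \<forall>s\<in>{1..S}. 0 \<le> lamL l m s) \<and>
     (\<forall>m<M. \<forall>s\<in>{1..S}. (\<Sum>l<L. lamL l m s) = lam m s) \<and>
     (\<forall>l<L.
        (\<forall>N\<in>Nset M S K R C l. 0 \<le> \<pi> l N) \<and> (\<Sum>N\<in>Nset M S K R C l. \<pi> l N) = 1 \<and>
        (\<forall>N\<in>Nset M S K R C l. \<forall>N'\<in>Nset M S K R C l. 0 \<le> P l N N') \<and>
        (\<forall>N\<in>Nset M S K R C l. (\<Sum>N'\<in>Nset M S K R C l. P l N N') = 1) \<and>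
        (\<forall>N'\<in>Nset M S K R C l. (\<Sum>N\<in>Nset M S K R C l. \<pi> l N * P l N N') = \<pi> l N') \<and>
        (\<forall>m<M. (\<Sum>s\<in>{1..S}. real s * lamL l m s)
                 \<le> (\<Sum>N\<in>Nset M S K R C l. \<pi> l N * real (\<Sum>s\<in>{1..S}. N m s))))"

definition opt_objective :: "nat \<Rightarrow> nat \<Rightarrow> nat \<Rightarrow> nat \<Rightarrow> (nat \<Rightarrow> nat \<Rightarrow> real) \<Rightarrow> (nat \<Rightarrow> nat \<Rightarrow> real)
    \<Rightarrow> real \<Rightarrow> (nat \<Rightarrow> real) \<Rightarrow> real \<Rightarrow> real
    \<Rightarrow> (nat \<Rightarrow> jobconf \<Rightarrow> real) \<Rightarrow> (nat \<Rightarrow> jobconf \<Rightarrow> jobconf \<Rightarrow> real) \<Rightarrow> real" where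
  "opt_objective L M S K R C c0 c V U \<pi> P =
     (\<Sum>l<L. V * (\<Sum>N\<in>Nset M S K R C l. \<pi> l N * cost1 c0 c M S N)
           + U * (\<Sum>N\<in>Nset M S K R C l. \<pi> l N *
                    (\<Sum>N'\<in>Nset M S K R C l. P l N N' * cost2 M S N N')))"

text \<open>C_opt(lambda): the optimal value (infimum, which is attained) of the problem.\<close>
definition Copt :: "nat \<Rightarrow> nat \<Rightarrow> nat \<Rightarrow> nat \<Rightarrow> (nat \<Rightarrow> nat \<Rightarrow> real) \<Rightarrow> (nat \<Rightarrow> nat \<Rightarrow> real)
    \<Rightarrow> real \<Rightarrow> (nat \<Rightarrow> real) \<Rightarrow> real \<Rightarrow> real \<Rightarrow> (nat \<Rightarrow> nat \<Rightarrow> real) \<Rightarrow> real" where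
  "Copt L M S K R C c0 c V U lam =
     Inf {opt_objective L M S K R C c0 c V U \<pi> P | lamL \<pi> P. opt_feasible L M S K R C lam lamL \<pi> P}"

end

theory Submission
  imports Defs
begin



lemma finite_Nset:
  assumes R_nonneg: "\<forall>m<M. \<forall>k<K. 0 \<le> R m k"
    and R_pos: "\<forall>m<M. \<exists>k<K. 0 < R m k"
  shows "finite (Nset M S K R C l)"
proof -
  have "\<forall>m<M. \<exists>b::nat. \<forall>N\<in>Nset M S K R C l. (\<Sum>s\<in>{1..S}. N m s) \<le> b"
  proof (intro allI impI)
    fix m assume m: "m < M"
    obtain k where k: "k < K" "0 < R m k" using R_pos m by blast
    show "\<exists>b::nat. \<forall>N\<in>Nset M S K R C l. (\<Sum>s\<in>{1..S}. N m s) \<le> b"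
    proof (intro exI ballI)
      fix N assume N: "N \<in> Nset M S K R C l"
      define \<eta> where "\<eta> = (\<lambda>m. \<Sum>s\<in>{1..S}. N m s)"
      have W: "(\<Sum>m<M. real (\<eta> m) * R m k) \<le> C l k"
        using N k unfolding Nset_def Wset_def \<eta>_def by auto
      have "real (\<eta> m) * R m k \<le> (\<Sum>m<M. real (\<eta> m) * R m k)"
        by (rule member_le_sum) (use m R_nonneg k in auto)
      with W have "real (\<eta> m) * R m k \<le> C l k" by linarith
      then have "real (\<eta> m) \<le> C l k / R m k" using k by (simp add: field_simps)
      then have "real (\<eta> m) \<le> real (nat \<lceil>C l k / R m k\<rceil>)" by linarith
      then show "(\<Sum>s\<in>{1..S}. N m s) \<le> nat \<lceil>C l k / R m k\<rceil>" unfolding \<eta>_def by linarith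
    qed
  qed
  then obtain b where b: "\<forall>m<M. \<forall>N\<in>Nset M S K R C l. (\<Sum>s\<in>{1..S}. N m s) \<le> b m"
    by metis
  define B where "B = (\<Sum>m<M. b m)"
  define A where "A = {..<M} \<times> {1..S}"
  have bnd: "\<forall>N\<in>Nset M S K R C l. \<forall>p\<in>A. N (fst p) (snd p) \<le> B"
  proof (intro ballI)
    fix N p assume N: "N \<in> Nset M S K R C l" and p: "p \<in> A"
    have "N (fst p) (snd p) \<le> (\<Sum>s\<in>{1..S}. N (fst p) s)"
      by (rule member_le_sum) (use p A_def in auto)
    also have "\<dots> \<le> b (fst p)" using b N p A_def by auto
    also have "\<dots> \<le> B" unfolding B_def by (rule member_le_sum) (use p A_def in auto)
    finally show "N (fst p) (snd p) \<le> B" .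
  qed
  have "Nset M S K R C l \<subseteq> (\<lambda>f. \<lambda>m s. if (m,s) \<in> A then f (m,s) else 0) ` (\<Pi>\<^sub>E p\<in>A. {..B})"
  proof
    fix N assume N: "N \<in> Nset M S K R C l"
    have "N = (\<lambda>m s. if (m,s) \<in> A then (restrict (\<lambda>p. N (fst p) (snd p)) A) (m,s) else 0)"
      using N unfolding Nset_def A_def by (auto intro!: ext simp: Suc_le_eq)
    moreover have "restrict (\<lambda>p. N (fst p) (snd p)) A \<in> (\<Pi>\<^sub>E p\<in>A. {..B})"
      using bnd N by auto
    ultimately show "N \<in> (\<lambda>f. \<lambda>m s. if (m,s) \<in> A then f (m,s) else 0) ` (\<Pi>\<^sub>E p\<in>A. {..B})"
      by blast
  qed
  moreover have "finite (\<Pi>\<^sub>E p\<in>A. {..B})" unfolding A_def by (intro finite_PiE) auto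
  ultimately show ?thesis using finite_subset by blast
qed

lemma subseq_finite:
  fixes f :: "nat \<Rightarrow> 'b \<Rightarrow> real"
  assumes "finite D" and "\<forall>d\<in>D. \<forall>n. \<bar>f n d\<bar> \<le> B"
  shows "\<exists>r. strict_mono r \<and> (\<forall>d\<in>D. \<exists>x. (\<lambda>n. f (r n) d) \<longlonglongrightarrow> x)"
  using assms
proof (induction D rule: finite_induct)
  case empty
  then show ?case by (intro exI[of _ id]) (auto simp: strict_mono_def)
next
  case (insert y D)
  then obtain r where r: "strict_mono r" "\<forall>d\<in>D. \<exists>x. (\<lambda>n. f (r n) d) \<longlonglongrightarrow> x" by auto
  have "bounded (range (\<lambda>n. f (r n) y))"
    using insert(4) by (intro boundedI[of _ B]) auto
  then obtain l r2 where r2: "strict_mono r2" "((\<lambda>n. f (r n) y) \<circ> r2) \<longlonglongrightarrow> l"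
    using bounded_imp_convergent_subsequence by blast
  have "strict_mono (r \<circ> r2)" using r(1) r2(1) by (simp add: strict_mono_o)
  moreover have "\<forall>d\<in>insert y D. \<exists>x. (\<lambda>n. f ((r \<circ> r2) n) d) \<longlonglongrightarrow> x"
  proof
    fix d assume "d \<in> insert y D"
    then show "\<exists>x. (\<lambda>n. f ((r \<circ> r2) n) d) \<longlonglongrightarrow> x"
    proof
      assume "d = y" then show ?thesis using r2(2) by (auto simp: o_def)
    next
      assume "d \<in> D"
      then obtain x where "(\<lambda>n. f (r n) d) \<longlonglongrightarrow> x" using r(2) by auto
      from LIMSEQ_subseq_LIMSEQ[OF this r2(1)] show ?thesis by (auto simp: o_def)
    qed
  qed
  ultimately show ?case by blast
qed

lemma shift_sum:
  fixes f :: "nat \<Rightarrow> real"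
  shows "(\<Sum>s\<in>{1..n}. real s * f (Suc s)) = (\<Sum>s\<in>{1..n}. (real s - 1) * f s) + real n * f (Suc n)"
  by (induction n) (auto simp: algebra_simps)

lemma exp_finite:
  fixes X :: "'a \<Rightarrow> 'b" and f :: "'b \<Rightarrow> real"
  assumes "finite_measure Mp" "finite D" "\<forall>\<omega>\<in>space Mp. X \<omega> \<in> D"
    and "\<forall>x\<in>D. {\<omega>\<in>space Mp. X \<omega> = x} \<in> sets Mp"
  shows "integrable Mp (\<lambda>\<omega>. f (X \<omega>))"
    "integral\<^sup>L Mp (\<lambda>\<omega>. f (X \<omega>)) = (\<Sum>x\<in>D. f x * measure Mp {\<omega>\<in>space Mp. X \<omega> = x})"
proof -
  interpret finite_measure Mp by fact
  have eq: "\<And>\<omega>. \<omega> \<in> space Mp \<Longrightarrow> f (X \<omega>) = (\<Sum>x\<in>D. f x * indicator {\<omega>\<in>space Mp. X \<omega> = x} \<omega>)"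
  proof -
    fix \<omega> assume w: "\<omega> \<in> space Mp"
    have "(\<Sum>x\<in>D. f x * indicator {\<omega>\<in>space Mp. X \<omega> = x} \<omega>) = (\<Sum>x\<in>D. if x = X \<omega> then f x else 0)"
      using w by (intro sum.cong) (auto simp: indicator_def)
    also have "\<dots> = f (X \<omega>)" using assms(2,3) w by (simp add: sum.delta')
    finally show "f (X \<omega>) = (\<Sum>x\<in>D. f x * indicator {\<omega>\<in>space Mp. X \<omega> = x} \<omega>)" by simp
  qed
  have int: "integrable Mp (\<lambda>\<omega>. \<Sum>x\<in>D. f x * indicator {\<omega>\<in>space Mp. X \<omega> = x} \<omega>)"
  proof (rule Bochner_Integration.integrable_sum)
    fix x assume "x \<in> D"
    then have "integrable Mp (indicator {\<omega>\<in>space Mp. X \<omega> = x} :: 'a \<Rightarrow> real)"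
      using assms(4) by (intro integrable_real_indicator) (auto simp: emeasure_eq_measure)
    then show "integrable Mp (\<lambda>\<omega>. f x * indicator {\<omega>\<in>space Mp. X \<omega> = x} \<omega>)"
      by (rule integrable_mult_right)
  qed
  show "integrable Mp (\<lambda>\<omega>. f (X \<omega>))"
    using int by (subst Bochner_Integration.integrable_cong[OF refl eq]) auto
  have "integral\<^sup>L Mp (\<lambda>\<omega>. f (X \<omega>)) = integral\<^sup>L Mp (\<lambda>\<omega>. \<Sum>x\<in>D. f x * indicator {\<omega>\<in>space Mp. X \<omega> = x} \<omega>)"
    by (rule Bochner_Integration.integral_cong[OF refl eq])
  also have "\<dots> = (\<Sum>x\<in>D. f x * measure Mp {\<omega>\<in>space Mp. X \<omega> = x})"
  proof -
    have "integral\<^sup>L Mp (\<lambda>\<omega>. \<Sum>x\<in>D. f x * indicator {\<omega>\<in>space Mp. X \<omega> = x} \<omega>)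
       = (\<Sum>x\<in>D. integral\<^sup>L Mp (\<lambda>\<omega>. f x * indicator {\<omega>\<in>space Mp. X \<omega> = x} \<omega>))"
      using assms(4) by (intro Bochner_Integration.integral_sum integrable_mult_right integrable_real_indicator) (auto simp: emeasure_eq_measure)
    also have "\<dots> = (\<Sum>x\<in>D. f x * measure Mp {\<omega>\<in>space Mp. X \<omega> = x})"
      using assms(4) by (intro sum.cong refl) (auto simp: emeasure_eq_measure)
    finally show ?thesis .
  qed
  finally show "integral\<^sup>L Mp (\<lambda>\<omega>. f (X \<omega>)) = (\<Sum>x\<in>D. f x * measure Mp {\<omega>\<in>space Mp. X \<omega> = x})" .
qed




lemma core:
  fixes mu :: "nat \<Rightarrow> nat \<Rightarrow> jobconf \<Rightarrow> jobconf \<Rightarrow> real" and a :: "nat \<Rightarrow> real"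
  assumes fin: "\<forall>l<L. finite (Nset M S K R C l)"
    and nn: "\<forall>T. \<forall>l<L. \<forall>N\<in>Nset M S K R C l. \<forall>N'\<in>Nset M S K R C l. 0 \<le> mu T l N N'"
    and sum1: "\<forall>T. \<forall>l<L. (\<Sum>N\<in>Nset M S K R C l. \<Sum>N'\<in>Nset M S K R C l. mu T l N N') = 1"
    and stat: "\<forall>T. \<forall>l<L. \<forall>N\<in>Nset M S K R C l.
        (\<Sum>N'\<in>Nset M S K R C l. mu T l N' N) = (\<Sum>N'\<in>Nset M S K R C l. mu T l N N')"
    and cap: "\<forall>T. \<forall>m<M. (\<Sum>s\<in>{1..S}. real s * lam m s) - Be / (real T + 1) \<le>
        (\<Sum>l<L. \<Sum>N\<in>Nset M S K R C l. \<Sum>N'\<in>Nset M S K R C l. mu T l N N' * real (\<Sum>s\<in>{1..S}. N m s))"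
    and lam_nn: "\<forall>m<M. \<forall>s\<in>{1..S}. 0 \<le> lam m s"
    and c0: "0 \<le> c0" and cm: "\<forall>m<M. 0 \<le> c m" and U: "0 \<le> U" and V: "0 \<le> V"
    and conv: "(\<lambda>T. (\<Sum>l<L. \<Sum>N\<in>Nset M S K R C l. \<Sum>N'\<in>Nset M S K R C l.
                 mu T l N N' * (V * cost1 c0 c M S N' + U * cost2 M S N N')) - a T) \<longlonglongrightarrow> 0"
    and abnd: "\<forall>T. 0 \<le> a T \<and> a T \<le> Ba"
  shows "liminf (\<lambda>T. ereal (a T)) \<ge> ereal (Copt L M S K R C c0 c V U lam)"
proof -
  define Ns where "Ns = Nset M S K R C"
  note defs = Ns_def[symmetric]
  obtain r0 where r0: "strict_mono r0" "((\<lambda>T. ereal (a T)) \<circ> r0) \<longlonglongrightarrow> liminf (\<lambda>T. ereal (a T))"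
    using liminf_subseq_lim by blast
  have "liminf (\<lambda>T. ereal (a T)) \<ge> 0"
    by (rule LIMSEQ_le_const[OF r0(2)]) (use abnd in auto)
  moreover have "liminf (\<lambda>T. ereal (a T)) \<le> ereal Ba"
    by (rule LIMSEQ_le_const2[OF r0(2)]) (use abnd in auto)
  ultimately obtain ell where ell: "liminf (\<lambda>T. ereal (a T)) = ereal ell"
    by (cases "liminf (\<lambda>T. ereal (a T))") auto
  have a_r0: "(\<lambda>n. a (r0 n)) \<longlonglongrightarrow> ell" using r0(2) ell by (simp add: o_def)
  define D where "D = Sigma {..<L} (\<lambda>l. Ns l \<times> Ns l)"
  have finD: "finite D" unfolding D_def using fin defs by (auto intro!: finite_SigmaI)
  have mu_le1: "mu T l N N' \<le> 1" if "l < L" "N \<in> Ns l" "N' \<in> Ns l" for T l N N'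
  proof -
    have "mu T l N N' \<le> (\<Sum>N'\<in>Ns l. mu T l N N')"
      by (rule member_le_sum) (use that nn fin defs in auto)
    also have "\<dots> \<le> (\<Sum>N\<in>Ns l. \<Sum>N'\<in>Ns l. mu T l N N')"
      by (rule member_le_sum[where f="\<lambda>N. \<Sum>N'\<in>Ns l. mu T l N N'"]) (use that nn fin defs in \<open>auto intro: sum_nonneg\<close>)
    finally show ?thesis using sum1 that defs by auto
  qed
  have "\<exists>r. strict_mono r \<and> (\<forall>d\<in>D. \<exists>x. (\<lambda>n. (\<lambda>n d. mu (r0 n) (fst d) (fst (snd d)) (snd (snd d))) (r n) d) \<longlonglongrightarrow> x)"
    by (rule subseq_finite[OF finD, where B=1]) (use nn mu_le1 defs in \<open>auto simp: D_def\<close>)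
  then obtain r1 where r1: "strict_mono r1"
    "\<forall>d\<in>D. \<exists>x. (\<lambda>n. mu (r0 (r1 n)) (fst d) (fst (snd d)) (snd (snd d))) \<longlonglongrightarrow> x" by auto
  define r where "r = r0 \<circ> r1"
  have r: "strict_mono r" unfolding r_def using r0(1) r1(1) by (simp add: strict_mono_o)
  define ms where "ms = (\<lambda>l N N'. lim (\<lambda>n. mu (r n) l N N'))"
  have lim_mu: "(\<lambda>n. mu (r n) l N N') \<longlonglongrightarrow> ms l N N'" if "l < L" "N \<in> Ns l" "N' \<in> Ns l" for l N N'
  proof -
    from r1(2) that obtain x where "(\<lambda>n. mu (r n) l N N') \<longlonglongrightarrow> x"
      unfolding D_def r_def by fastforce
    then show ?thesis unfolding ms_def using convergent_LIMSEQ_iff convergentI by blast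
  qed
  let ?lim = "\<lambda>n. n"
  have ms_nn: "0 \<le> ms l N N'" if "l < L" "N \<in> Ns l" "N' \<in> Ns l" for l N N'
    by (rule LIMSEQ_le_const[OF lim_mu[OF that]]) (use nn that defs in auto)
  have ms_sum1: "(\<Sum>N\<in>Ns l. \<Sum>N'\<in>Ns l. ms l N N') = 1" if "l < L" for l
  proof -
    have "(\<lambda>n. \<Sum>N\<in>Ns l. \<Sum>N'\<in>Ns l. mu (r n) l N N') \<longlonglongrightarrow> (\<Sum>N\<in>Ns l. \<Sum>N'\<in>Ns l. ms l N N')"
      by (intro tendsto_sum lim_mu that)
    moreover have "(\<lambda>n. \<Sum>N\<in>Ns l. \<Sum>N'\<in>Ns l. mu (r n) l N N') = (\<lambda>n. 1)"
      using sum1 that defs by auto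
    ultimately show ?thesis using LIMSEQ_unique tendsto_const by metis
  qed
  have ms_stat: "(\<Sum>N'\<in>Ns l. ms l N' N) = (\<Sum>N'\<in>Ns l. ms l N N')" if "l < L" "N \<in> Ns l" for l N
  proof -
    have "(\<lambda>n. \<Sum>N'\<in>Ns l. mu (r n) l N' N) \<longlonglongrightarrow> (\<Sum>N'\<in>Ns l. ms l N' N)"
      by (intro tendsto_sum lim_mu that)
    moreover have "(\<lambda>n. \<Sum>N'\<in>Ns l. mu (r n) l N N') \<longlonglongrightarrow> (\<Sum>N'\<in>Ns l. ms l N N')"
      by (intro tendsto_sum lim_mu that)
    moreover have "(\<lambda>n. \<Sum>N'\<in>Ns l. mu (r n) l N' N) = (\<lambda>n. \<Sum>N'\<in>Ns l. mu (r n) l N N')"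
      using stat that defs by auto
    ultimately show ?thesis using LIMSEQ_unique by metis
  qed
  have rinf: "(\<lambda>n. Be / (real (r n) + 1)) \<longlonglongrightarrow> 0"
  proof -
    have "(\<lambda>n. Be / (real n + 1)) \<longlonglongrightarrow> 0"
      using tendsto_mult_right_zero[OF LIMSEQ_inverse_real_of_nat, of Be]
      by (simp add: divide_inverse add.commute)
    from LIMSEQ_subseq_LIMSEQ[OF this r] show ?thesis by (simp add: o_def)
  qed
  have ms_cap: "(\<Sum>s\<in>{1..S}. real s * lam m s) \<le>
        (\<Sum>l<L. \<Sum>N\<in>Ns l. \<Sum>N'\<in>Ns l. ms l N N' * real (\<Sum>s\<in>{1..S}. N m s))" if "m < M" for m
  proof (rule LIMSEQ_le)
    show "(\<lambda>n. (\<Sum>s\<in>{1..S}. real s * lam m s) - Be / (real (r n) + 1)) \<longlonglongrightarrow> (\<Sum>s\<in>{1..S}. real s * lam m s)"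
      using tendsto_diff[OF tendsto_const rinf] by simp
    show "(\<lambda>n. \<Sum>l<L. \<Sum>N\<in>Ns l. \<Sum>N'\<in>Ns l. mu (r n) l N N' * real (\<Sum>s\<in>{1..S}. N m s)) \<longlonglongrightarrow>
        (\<Sum>l<L. \<Sum>N\<in>Ns l. \<Sum>N'\<in>Ns l. ms l N N' * real (\<Sum>s\<in>{1..S}. N m s))"
      by (intro tendsto_sum tendsto_mult_right lim_mu) auto
    show "\<exists>N. \<forall>n\<ge>N. (\<Sum>s\<in>{1..S}. real s * lam m s) - Be / (real (r n) + 1) \<le>
        (\<Sum>l<L. \<Sum>N\<in>Ns l. \<Sum>N'\<in>Ns l. mu (r n) l N N' * real (\<Sum>s\<in>{1..S}. N m s))"
      using cap that defs by auto
  qed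
  define cst where "cst = (\<lambda>N N'. V * cost1 c0 c M S N' + U * cost2 M S N N')"
  have ms_cost: "(\<Sum>l<L. \<Sum>N\<in>Ns l. \<Sum>N'\<in>Ns l. ms l N N' * cst N N') = ell"
  proof -
    have A: "(\<lambda>n. \<Sum>l<L. \<Sum>N\<in>Ns l. \<Sum>N'\<in>Ns l. mu (r n) l N N' * cst N N') \<longlonglongrightarrow>
        (\<Sum>l<L. \<Sum>N\<in>Ns l. \<Sum>N'\<in>Ns l. ms l N N' * cst N N')"
      by (intro tendsto_sum tendsto_mult_right lim_mu) auto
    have B: "(\<lambda>n. (\<Sum>l<L. \<Sum>N\<in>Ns l. \<Sum>N'\<in>Ns l. mu (r n) l N N' * cst N N') - a (r n)) \<longlonglongrightarrow> 0"
      using LIMSEQ_subseq_LIMSEQ[OF conv r] by (simp add: o_def cst_def defs)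
    have C: "(\<lambda>n. a (r n)) \<longlonglongrightarrow> ell"
      using LIMSEQ_subseq_LIMSEQ[OF a_r0 r1(1)] by (simp add: o_def r_def)
    have "(\<lambda>n. ((\<Sum>l<L. \<Sum>N\<in>Ns l. \<Sum>N'\<in>Ns l. mu (r n) l N N' * cst N N') - a (r n)) + a (r n)) \<longlonglongrightarrow> 0 + ell"
      by (intro tendsto_add B C)
    then have "(\<lambda>n. \<Sum>l<L. \<Sum>N\<in>Ns l. \<Sum>N'\<in>Ns l. mu (r n) l N N' * cst N N') \<longlonglongrightarrow> ell" by simp
    with A show ?thesis using LIMSEQ_unique by blast
  qed
  define pi where "pi = (\<lambda>l N. \<Sum>N'\<in>Ns l. ms l N N')"
  define P where "P = (\<lambda>l N N'. if pi l N = 0 then (if N = N' then 1 else 0) else ms l N N' / pi l N)"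
  define capl where "capl = (\<lambda>l m. \<Sum>N\<in>Ns l. pi l N * real (\<Sum>s\<in>{1..S}. N m s))"
  define tot where "tot = (\<lambda>m. \<Sum>l<L. capl l m)"
  define lamL where "lamL = (\<lambda>l m s. if tot m = 0 then 0 else lam m s * capl l m / tot m)"
  have pi_nn: "0 \<le> pi l N" if "l < L" "N \<in> Ns l" for l N
    unfolding pi_def using that ms_nn by (auto intro: sum_nonneg)
  have kP: "pi l N * P l N N' = ms l N N'" if "l < L" "N \<in> Ns l" "N' \<in> Ns l" for l N N'
  proof (cases "pi l N = 0")
    case True
    have "ms l N N' \<le> pi l N" unfolding pi_def
      by (rule member_le_sum) (use that ms_nn fin defs in auto)
    with ms_nn[OF that] True show ?thesis by (simp add: P_def)
  qed (simp add: P_def)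
  have capl_nn: "0 \<le> capl l m" if "l < L" for l m
    unfolding capl_def using pi_nn that by (auto intro!: sum_nonneg mult_nonneg_nonneg)
  have tot_nn: "0 \<le> tot m" for m unfolding tot_def using capl_nn by (auto intro!: sum_nonneg)
  have tot_eq: "tot m = (\<Sum>l<L. \<Sum>N\<in>Ns l. \<Sum>N'\<in>Ns l. ms l N N' * real (\<Sum>s\<in>{1..S}. N m s))" for m
    unfolding tot_def capl_def pi_def by (simp add: sum_distrib_right)
  have lamsum_le: "(\<Sum>s\<in>{1..S}. real s * lam m s) \<le> tot m" if "m < M" for m
    using ms_cap[OF that] tot_eq by simp
  have lam0: "lam m s = 0" if "m < M" "s \<in> {1..S}" "tot m = 0" for m s
  proof -
    have nn': "\<forall>s\<in>{1..S}. 0 \<le> real s * lam m s" using lam_nn that by auto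
    have "(\<Sum>s\<in>{1..S}. real s * lam m s) = 0"
    proof -
      have "0 \<le> (\<Sum>s\<in>{1..S}. real s * lam m s)" using nn' by (intro sum_nonneg) auto
      then show ?thesis using lamsum_le[OF that(1)] that(3) by linarith
    qed
    then have "real s * lam m s = 0"
      using sum_nonneg_eq_0_iff[of "{1..S}" "\<lambda>s. real s * lam m s"] nn' that(2) by simp
    moreover have "real s \<noteq> 0" using that(2) by auto
    ultimately show ?thesis by simp
  qed
  have feas: "opt_feasible L M S K R C lam lamL pi P"
    unfolding opt_feasible_def defs
  proof (intro conjI allI impI ballI)
    fix l m s assume "l < L" "m < M" "s \<in> {1..S}"
    then show "0 \<le> lamL l m s" unfolding lamL_def
      using lam_nn capl_nn tot_nn by (auto intro!: divide_nonneg_nonneg mult_nonneg_nonneg)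
  next
    fix m s assume ms: "m < M" "s \<in> {1..S}"
    show "(\<Sum>l<L. lamL l m s) = lam m s"
    proof (cases "tot m = 0")
      case True then show ?thesis using lam0[OF ms] by (simp add: lamL_def)
    next
      case False
      have "(\<Sum>l<L. lamL l m s) = lam m s * (\<Sum>l<L. capl l m) / tot m"
        using False by (simp add: lamL_def sum_distrib_left sum_divide_distrib)
      then show ?thesis using False by (simp add: tot_def)
    qed
  next
    fix l N assume "l < L" "N \<in> Ns l" then show "0 \<le> pi l N" by (rule pi_nn)
  next
    fix l assume "l < L" then show "(\<Sum>N\<in>Ns l. pi l N) = 1" unfolding pi_def using ms_sum1 by simp
  next
    fix l N N' assume "l < L" "N \<in> Ns l" "N' \<in> Ns l"
    then show "0 \<le> P l N N'" unfolding P_def using ms_nn pi_nn by auto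
  next
    fix l N assume lN: "l < L" "N \<in> Ns l"
    show "(\<Sum>N'\<in>Ns l. P l N N') = 1"
    proof (cases "pi l N = 0")
      case True then show ?thesis using lN fin defs by (simp add: P_def)
    next
      case False then show ?thesis by (simp add: P_def sum_divide_distrib[symmetric] pi_def)
    qed
  next
    fix l N' assume lN: "l < L" "N' \<in> Ns l"
    have "(\<Sum>N\<in>Ns l. pi l N * P l N N') = (\<Sum>N\<in>Ns l. ms l N N')"
      using kP lN by (intro sum.cong) auto
    also have "\<dots> = pi l N'" unfolding pi_def using ms_stat[OF lN] by simp
    finally show "(\<Sum>N\<in>Ns l. pi l N * P l N N') = pi l N'" .
  next
    fix l m assume lm: "l < L" "m < M"
    show "(\<Sum>s\<in>{1..S}. real s * lamL l m s) \<le> (\<Sum>N\<in>Ns l. pi l N * real (\<Sum>s\<in>{1..S}. N m s))"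
    proof (cases "tot m = 0")
      case True then show ?thesis using capl_nn[OF lm(1)] by (simp add: lamL_def capl_def)
    next
      case False
      then have tp: "0 < tot m" using tot_nn[of m] by linarith
      have "(\<Sum>s\<in>{1..S}. real s * lamL l m s) = (\<Sum>s\<in>{1..S}. (real s * lam m s) * (capl l m / tot m))"
        using False by (intro sum.cong) (auto simp: lamL_def)
      also have "\<dots> = (\<Sum>s\<in>{1..S}. real s * lam m s) * (capl l m / tot m)"
        by (rule sum_distrib_right[symmetric])
      also have "\<dots> \<le> tot m * (capl l m / tot m)"
        by (intro mult_right_mono lamsum_le lm divide_nonneg_nonneg capl_nn tot_nn)
      also have "\<dots> = capl l m" using tp by simp
      finally show ?thesis by (simp add: capl_def)
    qed
  qed
  have obj: "opt_objective L M S K R C c0 c V U pi P = ell"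
  proof -
    have "opt_objective L M S K R C c0 c V U pi P =
        (\<Sum>l<L. \<Sum>N\<in>Ns l. \<Sum>N'\<in>Ns l. ms l N N' * cst N N')"
      unfolding opt_objective_def defs
    proof (intro sum.cong refl)
      fix l assume l: "l \<in> {..<L}"
      have e1: "(\<Sum>N\<in>Ns l. pi l N * cost1 c0 c M S N) = (\<Sum>N\<in>Ns l. \<Sum>N'\<in>Ns l. ms l N N' * cost1 c0 c M S N')"
      proof -
        have "(\<Sum>N\<in>Ns l. pi l N * cost1 c0 c M S N) = (\<Sum>N\<in>Ns l. (\<Sum>N'\<in>Ns l. ms l N' N) * cost1 c0 c M S N)"
          unfolding pi_def using ms_stat l by (intro sum.cong) auto
        also have "\<dots> = (\<Sum>N\<in>Ns l. \<Sum>N'\<in>Ns l. ms l N' N * cost1 c0 c M S N)"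
          by (simp add: sum_distrib_right)
        also have "\<dots> = (\<Sum>N'\<in>Ns l. \<Sum>N\<in>Ns l. ms l N' N * cost1 c0 c M S N)"
          by (rule sum.swap)
        finally show ?thesis .
      qed
      have e2: "(\<Sum>N\<in>Ns l. pi l N * (\<Sum>N'\<in>Ns l. P l N N' * cost2 M S N N')) =
          (\<Sum>N\<in>Ns l. \<Sum>N'\<in>Ns l. ms l N N' * cost2 M S N N')"
      proof (intro sum.cong refl)
        fix N assume N: "N \<in> Ns l"
        have "pi l N * (\<Sum>N'\<in>Ns l. P l N N' * cost2 M S N N') = (\<Sum>N'\<in>Ns l. (pi l N * P l N N') * cost2 M S N N')"
          by (simp add: sum_distrib_left mult.assoc)
        also have "\<dots> = (\<Sum>N'\<in>Ns l. ms l N N' * cost2 M S N N')"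
          using kP l N by (intro sum.cong refl) auto
        finally show "pi l N * (\<Sum>N'\<in>Ns l. P l N N' * cost2 M S N N') = (\<Sum>N'\<in>Ns l. ms l N N' * cost2 M S N N')" .
      qed
      show "V * (\<Sum>N\<in>Ns l. pi l N * cost1 c0 c M S N) + U * (\<Sum>N\<in>Ns l. pi l N * (\<Sum>N'\<in>Ns l. P l N N' * cost2 M S N N')) =
          (\<Sum>N\<in>Ns l. \<Sum>N'\<in>Ns l. ms l N N' * cst N N')"
      proof -
        have "(\<Sum>N\<in>Ns l. \<Sum>N'\<in>Ns l. ms l N N' * cst N N') =
            (\<Sum>N\<in>Ns l. \<Sum>N'\<in>Ns l. V * (ms l N N' * cost1 c0 c M S N') + U * (ms l N N' * cost2 M S N N'))"
          unfolding cst_def by (intro sum.cong refl) (simp add: algebra_simps)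
        also have "\<dots> = V * (\<Sum>N\<in>Ns l. \<Sum>N'\<in>Ns l. ms l N N' * cost1 c0 c M S N') + U * (\<Sum>N\<in>Ns l. \<Sum>N'\<in>Ns l. ms l N N' * cost2 M S N N')"
          by (simp add: sum.distrib sum_distrib_left)
        finally show ?thesis unfolding e1 e2 by simp
      qed
    qed
    then show ?thesis using ms_cost by simp
  qed
  have cost1_nn: "0 \<le> cost1 c0 c M S N" for N
    unfolding cost1_def using c0 cm by (auto intro!: add_nonneg_nonneg sum_nonneg mult_nonneg_nonneg)
  have cost2_nn: "0 \<le> cost2 M S N N'" for N N'
    unfolding cost2_def by (auto intro!: sum_nonneg)
  have bdd: "bdd_below {opt_objective L M S K R C c0 c V U \<pi> P | lamL \<pi> P. opt_feasible L M S K R C lam lamL \<pi> P}"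
  proof (rule bdd_belowI[of _ 0], clarify)
    fix lamL' \<pi>' P' assume f: "opt_feasible L M S K R C lam lamL' \<pi>' P'"
    show "0 \<le> opt_objective L M S K R C c0 c V U \<pi>' P'"
      unfolding opt_objective_def using f U V cost1_nn cost2_nn
      by (auto simp: opt_feasible_def intro!: sum_nonneg add_nonneg_nonneg mult_nonneg_nonneg)
  qed
  have "Copt L M S K R C c0 c V U lam \<le> ell"
    unfolding Copt_def using cInf_lower[OF _ bdd, of ell] feas obj by blast
  then show ?thesis using ell by simp
qed




lemma queue_facts:
  fixes Mp :: "'a measure" and A :: "nat \<Rightarrow> 'a \<Rightarrow> jobconf" and N :: "nat \<Rightarrow> nat \<Rightarrow> 'a \<Rightarrow> jobconf"
  assumes P: "prob_space Mp"
    and A_meas: "\<forall>t. A t \<in> measurable Mp (count_space UNIV)"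
    and A_support: "\<forall>t. \<forall>\<omega>\<in>space Mp. \<forall>m s. (M \<le> m \<or> s < 1 \<or> S < s) \<longrightarrow> A t \<omega> m s = 0"
    and A_bound: "\<forall>t. \<forall>\<omega>\<in>space Mp. \<forall>m s. A t \<omega> m s \<le> Amax"
    and N_meas: "\<forall>l<L. \<forall>t. N l t \<in> measurable Mp (count_space UNIV)"
  defines "q \<equiv> \<lambda>t \<omega>. queue L (\<lambda>t'. A t' \<omega>) (\<lambda>l t'. N l t' \<omega>) t"
  shows "\<forall>\<omega>\<in>space Mp. \<forall>m s. S < s \<longrightarrow> q t \<omega> m s = 0"
    and "\<forall>\<omega>\<in>space Mp. \<forall>m s. q t \<omega> m s \<le> 3 ^ t * Amax"
    and "\<forall>m s. (\<lambda>\<omega>. real (q t \<omega> m s)) \<in> borel_measurable Mp"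
proof -
  show Q1: "\<forall>\<omega>\<in>space Mp. \<forall>m s. S < s \<longrightarrow> q t \<omega> m s = 0" for t
    by (induction t) (auto simp: q_def A_support)
  show "\<forall>\<omega>\<in>space Mp. \<forall>m s. q t \<omega> m s \<le> 3 ^ t * Amax"
  proof (induction t)
    case 0 then show ?case using A_bound by (auto simp: q_def)
  next
    case (Suc t)
    show ?case
    proof (intro ballI allI)
      fix \<omega> m s assume w: "\<omega> \<in> space Mp"
      have "q (Suc t) \<omega> m s \<le> q t \<omega> m s + q t \<omega> m (Suc s) + A (Suc t) \<omega> m s"
        by (auto simp: q_def)
      also have "\<dots> \<le> 3 ^ t * Amax + 3 ^ t * Amax + Amax"
        using Suc w A_bound by (intro add_mono) auto
      also have "\<dots> \<le> 3 ^ Suc t * Amax"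
      proof -
        have "1 \<le> (3::nat) ^ t" by simp
        then have "Amax \<le> 3 ^ t * Amax" by simp
        then show ?thesis by simp
      qed
      finally show "q (Suc t) \<omega> m s \<le> 3 ^ Suc t * Amax" .
    qed
  qed
  have Am: "(\<lambda>\<omega>. real (A t \<omega> m s)) \<in> borel_measurable Mp" for t m s
    using measurable_compose[OF A_meas[rule_format, of t] borel_measurable_count_space[of "\<lambda>f. real (f m s)"]] by simp
  have Nm: "(\<lambda>\<omega>. real (N l t \<omega> m s)) \<in> borel_measurable Mp" if "l < L" for l t m s
    using measurable_compose[OF N_meas[rule_format, OF that, of t] borel_measurable_count_space[of "\<lambda>f. real (f m s)"]] by simp
  have Dm: "(\<lambda>\<omega>. real (\<Sum>l<L. N l t \<omega> m s)) \<in> borel_measurable Mp" for t m s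
    using Nm by (simp add: of_nat_sum)
  show "\<forall>m s. (\<lambda>\<omega>. real (q t \<omega> m s)) \<in> borel_measurable Mp"
  proof (induction t)
    case 0
    show ?case
    proof (intro allI)
      fix m s show "(\<lambda>\<omega>. real (q 0 \<omega> m s)) \<in> borel_measurable Mp"
        using Am[of 0 m s] by (cases "s = 0") (auto simp: q_def)
    qed
  next
    case (Suc t)
    show ?case
    proof (intro allI)
      fix m s
      have eq: "real (q (Suc t) \<omega> m s) = (if s = 0 then 0 else
          real (q t \<omega> m s) - min (real (q t \<omega> m s)) (real (\<Sum>l<L. N l t \<omega> m s))
          + min (real (q t \<omega> m (Suc s))) (real (\<Sum>l<L. N l t \<omega> m (Suc s))) + real (A (Suc t) \<omega> m s))" for \<omega>
        by (simp add: q_def of_nat_diff of_nat_min)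
      have "(\<lambda>\<omega>. (if s = 0 then 0 else
          real (q t \<omega> m s) - min (real (q t \<omega> m s)) (real (\<Sum>l<L. N l t \<omega> m s))
          + min (real (q t \<omega> m (Suc s))) (real (\<Sum>l<L. N l t \<omega> m (Suc s))) + real (A (Suc t) \<omega> m s))) \<in> borel_measurable Mp"
        using Suc Dm Am by (cases "s = 0") (auto intro!: borel_measurable_add borel_measurable_diff borel_measurable_min)
      then show "(\<lambda>\<omega>. real (q (Suc t) \<omega> m s)) \<in> borel_measurable Mp" by (simp only: eq)
    qed
  qed
qed

lemma queue_work:
  fixes Mp :: "'a measure" and A :: "nat \<Rightarrow> 'a \<Rightarrow> jobconf" and N :: "nat \<Rightarrow> nat \<Rightarrow> 'a \<Rightarrow> jobconf"
  assumes P: "prob_space Mp"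
    and A_meas: "\<forall>t. A t \<in> measurable Mp (count_space UNIV)"
    and A_support: "\<forall>t. \<forall>\<omega>\<in>space Mp. \<forall>m s. (M \<le> m \<or> s < 1 \<or> S < s) \<longrightarrow> A t \<omega> m s = 0"
    and A_bound: "\<forall>t. \<forall>\<omega>\<in>space Mp. \<forall>m s. A t \<omega> m s \<le> Amax"
    and A_mean: "\<forall>t. \<forall>m<M. \<forall>s\<in>{1..S}.
                   prob_space.expectation Mp (\<lambda>\<omega>. real (A t \<omega> m s)) = lam m s"
    and N_meas: "\<forall>l<L. \<forall>t. N l t \<in> measurable Mp (count_space UNIV)"
    and capint: "\<forall>t. integrable Mp (\<lambda>\<omega>. \<Sum>l<L. real (\<Sum>s\<in>{1..S}. N l t \<omega> m s))"
    and m: "m < M"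
  defines "q \<equiv> \<lambda>t \<omega>. queue L (\<lambda>t'. A t' \<omega>) (\<lambda>l t'. N l t' \<omega>) t"
  defines "W \<equiv> \<lambda>t \<omega>. \<Sum>s\<in>{1..S}. real s * real (q t \<omega> m s)"
  defines "capE \<equiv> \<lambda>t. integral\<^sup>L Mp (\<lambda>\<omega>. \<Sum>l<L. real (\<Sum>s\<in>{1..S}. N l t \<omega> m s))"
  shows "real (T+1) * (\<Sum>s\<in>{1..S}. real s * lam m s) - integral\<^sup>L Mp (W (T+1))
          \<le> (\<Sum>t\<in>{1..T}. capE (t - 1)) + capE T"
proof -
  interpret prob_space Mp by fact
  note QF0 = queue_facts[OF P A_meas A_support A_bound N_meas]
  have QF1: "\<forall>\<omega>\<in>space Mp. \<forall>m s. S < s \<longrightarrow> q t \<omega> m s = 0" for t using QF0(1) unfolding q_def by blast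
  have QF2: "\<forall>\<omega>\<in>space Mp. \<forall>m s. q t \<omega> m s \<le> 3 ^ t * Amax" for t using QF0(2) unfolding q_def by blast
  have QF3: "\<forall>m s. (\<lambda>\<omega>. real (q t \<omega> m s)) \<in> borel_measurable Mp" for t using QF0(3) unfolding q_def by blast
  note QF = QF1 QF2 QF3
  have qint: "integrable Mp (\<lambda>\<omega>. real (q t \<omega> m s))" for t s
  proof (rule integrable_const_bound[where B="real (3 ^ t * Amax)"])
    show "AE \<omega> in Mp. norm (real (q t \<omega> m s)) \<le> real (3 ^ t * Amax)"
      by (rule AE_I2) (use QF2 in \<open>auto simp del: of_nat_mult of_nat_power\<close>)
  qed (use QF3 in auto)
  have Wint: "integrable Mp (W t)" for t
    unfolding W_def by (intro Bochner_Integration.integrable_sum integrable_mult_right qint)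
  have Am: "(\<lambda>\<omega>. real (A t \<omega> m s)) \<in> borel_measurable Mp" for t s
    using measurable_compose[OF A_meas[rule_format, of t] borel_measurable_count_space[of "\<lambda>f. real (f m s)"]] by simp
  have Aint: "integrable Mp (\<lambda>\<omega>. real (A t \<omega> m s))" for t s
    by (rule integrable_const_bound[where B="real Amax"]) (use A_bound Am in auto)
  have Nm: "(\<lambda>\<omega>. real (N l t \<omega> m s)) \<in> borel_measurable Mp" if "l < L" for l t s
    using measurable_compose[OF N_meas[rule_format, OF that, of t] borel_measurable_count_space[of "\<lambda>f. real (f m s)"]] by simp
  define f where "f = (\<lambda>t \<omega> s. min (real (q t \<omega> m s)) (real (\<Sum>l<L. N l t \<omega> m s)))"
  define sv where "sv = (\<lambda>t \<omega>. \<Sum>s\<in>{1..S}. f t \<omega> s)"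
  have svint: "integrable Mp (sv t)" for t
    unfolding sv_def
  proof (intro Bochner_Integration.integrable_sum)
    fix s
    show "integrable Mp (\<lambda>\<omega>. f t \<omega> s)"
    proof (rule integrable_const_bound[where B="real (3 ^ t * Amax)"])
      show "AE \<omega> in Mp. norm (f t \<omega> s) \<le> real (3 ^ t * Amax)"
      proof (rule AE_I2)
        fix \<omega> assume w: "\<omega> \<in> space Mp"
        have "q t \<omega> m s \<le> 3 ^ t * Amax" using QF2 w by blast
        then have h1: "real (q t \<omega> m s) \<le> real (3 ^ t * Amax)" by (simp only: of_nat_le_iff)
        have h2: "0 \<le> real (\<Sum>l<L. N l t \<omega> m s)" by (rule of_nat_0_le_iff)
        have h3: "0 \<le> real (q t \<omega> m s)" by simp
        show "norm (f t \<omega> s) \<le> real (3 ^ t * Amax)" unfolding f_def real_norm_def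
          using h1 h2 h3 by (smt (verit) min_def)
      qed
      have "(\<lambda>\<omega>. real (\<Sum>l<L. N l t \<omega> m s)) \<in> borel_measurable Mp"
        using Nm by (simp add: of_nat_sum)
      then show "(\<lambda>\<omega>. f t \<omega> s) \<in> borel_measurable Mp"
        unfolding f_def using QF by (intro borel_measurable_min) auto
    qed
  qed
  have pw: "W (Suc t) \<omega> = W t \<omega> - sv t \<omega> + (\<Sum>s\<in>{1..S}. real s * real (A (Suc t) \<omega> m s))"
    if w: "\<omega> \<in> space Mp" for t \<omega>
  proof -
    have qs: "real (q (Suc t) \<omega> m s) = real (q t \<omega> m s) - f t \<omega> s + f t \<omega> (Suc s) + real (A (Suc t) \<omega> m s)"
      if "s \<in> {1..S}" for s
      using that by (simp add: q_def f_def of_nat_diff of_nat_min)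
    have "W (Suc t) \<omega> = (\<Sum>s\<in>{1..S}. real s * real (q t \<omega> m s) - real s * f t \<omega> s + real s * f t \<omega> (Suc s)
         + real s * real (A (Suc t) \<omega> m s))"
      unfolding W_def by (intro sum.cong refl) (simp add: qs algebra_simps)
    also have "\<dots> = W t \<omega> - (\<Sum>s\<in>{1..S}. real s * f t \<omega> s) + (\<Sum>s\<in>{1..S}. real s * f t \<omega> (Suc s))
         + (\<Sum>s\<in>{1..S}. real s * real (A (Suc t) \<omega> m s))"
      unfolding W_def by (simp add: sum.distrib sum_subtractf)
    also have "(\<Sum>s\<in>{1..S}. real s * f t \<omega> (Suc s)) = (\<Sum>s\<in>{1..S}. (real s - 1) * f t \<omega> s)"
    proof -
      have "f t \<omega> (Suc S) = 0" using QF(1) w by (simp add: f_def min_def sum_nonneg)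
      then show ?thesis using shift_sum[of "f t \<omega>" S] by simp
    qed
    also have "W t \<omega> - (\<Sum>s\<in>{1..S}. real s * f t \<omega> s) + (\<Sum>s\<in>{1..S}. (real s - 1) * f t \<omega> s) = W t \<omega> - sv t \<omega>"
      unfolding sv_def by (simp add: algebra_simps sum_subtractf[symmetric] sum.distrib[symmetric])
    finally show ?thesis by simp
  qed
  have EA: "integral\<^sup>L Mp (\<lambda>\<omega>. \<Sum>s\<in>{1..S}. real s * real (A t \<omega> m s)) = (\<Sum>s\<in>{1..S}. real s * lam m s)" for t
    using A_mean m Aint by (simp add: Bochner_Integration.integral_sum integrable_mult_right)
  have EW: "integral\<^sup>L Mp (W (Suc t)) = integral\<^sup>L Mp (W t) - integral\<^sup>L Mp (sv t) + (\<Sum>s\<in>{1..S}. real s * lam m s)" for t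
  proof -
    have "integral\<^sup>L Mp (W (Suc t)) = integral\<^sup>L Mp (\<lambda>\<omega>. W t \<omega> - sv t \<omega> + (\<Sum>s\<in>{1..S}. real s * real (A (Suc t) \<omega> m s)))"
      by (rule Bochner_Integration.integral_cong[OF refl pw])
    also have "\<dots> = integral\<^sup>L Mp (W t) - integral\<^sup>L Mp (sv t) + (\<Sum>s\<in>{1..S}. real s * lam m s)"
      using Wint svint Aint EA[of "Suc t"]
      by (subst Bochner_Integration.integral_add) (auto intro!: Bochner_Integration.integrable_sum integrable_mult_right)
    finally show ?thesis .
  qed
  have svle: "integral\<^sup>L Mp (sv t) \<le> capE t" for t
    unfolding capE_def
  proof (rule integral_mono[OF svint capint[rule_format]])
    fix \<omega> assume "\<omega> \<in> space Mp"
    have "sv t \<omega> \<le> (\<Sum>s\<in>{1..S}. real (\<Sum>l<L. N l t \<omega> m s))"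
      unfolding sv_def f_def by (intro sum_mono) auto
    also have "\<dots> = (\<Sum>l<L. real (\<Sum>s\<in>{1..S}. N l t \<omega> m s))"
      by (simp add: of_nat_sum) (rule sum.swap)
    finally show "sv t \<omega> \<le> (\<Sum>l<L. real (\<Sum>s\<in>{1..S}. N l t \<omega> m s))" .
  qed
  define lsum where "lsum = (\<Sum>s\<in>{1..S}. real s * lam m s)"
  have G: "(\<Sum>t\<in>{1..T}. integral\<^sup>L Mp (sv (t - 1))) + integral\<^sup>L Mp (sv T)
      = integral\<^sup>L Mp (W 0) + real (T+1) * lsum - integral\<^sup>L Mp (W (T+1))"
  proof (induction T)
    case 0 then show ?case using EW[of 0] by (simp add: lsum_def)
  next
    case (Suc T)
    have "(\<Sum>t\<in>{1..Suc T}. integral\<^sup>L Mp (sv (t - 1))) = (\<Sum>t\<in>{1..T}. integral\<^sup>L Mp (sv (t - 1))) + integral\<^sup>L Mp (sv T)"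
      by simp
    then show ?case using Suc EW[of "Suc T"] by (simp add: lsum_def algebra_simps)
  qed
  have W0: "0 \<le> integral\<^sup>L Mp (W 0)"
    unfolding W_def by (rule Bochner_Integration.integral_nonneg) (auto intro!: sum_nonneg)
  have "(\<Sum>t\<in>{1..T}. integral\<^sup>L Mp (sv (t - 1))) + integral\<^sup>L Mp (sv T) \<le> (\<Sum>t\<in>{1..T}. capE (t - 1)) + capE T"
    by (intro add_mono sum_mono svle)
  then show ?thesis using G W0 by (simp add: lsum_def)
qed

lemma queue_EW:
  fixes Mp :: "'a measure" and A :: "nat \<Rightarrow> 'a \<Rightarrow> jobconf" and N :: "nat \<Rightarrow> nat \<Rightarrow> 'a \<Rightarrow> jobconf"
  assumes P: "prob_space Mp"
    and A_meas: "\<forall>t. A t \<in> measurable Mp (count_space UNIV)"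
    and A_support: "\<forall>t. \<forall>\<omega>\<in>space Mp. \<forall>m s. (M \<le> m \<or> s < 1 \<or> S < s) \<longrightarrow> A t \<omega> m s = 0"
    and A_bound: "\<forall>t. \<forall>\<omega>\<in>space Mp. \<forall>m s. A t \<omega> m s \<le> Amax"
    and N_meas: "\<forall>l<L. \<forall>t. N l t \<in> measurable Mp (count_space UNIV)"
    and m: "m < M"
  shows "integral\<^sup>L Mp (\<lambda>\<omega>. \<Sum>s\<in>{1..S}. real s * real (queue L (\<lambda>t'. A t' \<omega>) (\<lambda>l t'. N l t' \<omega>) t m s))
     \<le> real S * (\<Sum>m'<M. \<Sum>s\<in>{1..S}. integral\<^sup>L Mp (\<lambda>\<omega>. real (queue L (\<lambda>t'. A t' \<omega>) (\<lambda>l t'. N l t' \<omega>) t m' s)))"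
proof -
  interpret prob_space Mp by fact
  define q where "q = (\<lambda>t \<omega>. queue L (\<lambda>t'. A t' \<omega>) (\<lambda>l t'. N l t' \<omega>) t)"
  note QF0 = queue_facts[OF P A_meas A_support A_bound N_meas]
  have QF2: "\<forall>\<omega>\<in>space Mp. \<forall>m s. q t \<omega> m s \<le> 3 ^ t * Amax" for t using QF0(2) unfolding q_def by blast
  have QF3: "\<forall>m s. (\<lambda>\<omega>. real (q t \<omega> m s)) \<in> borel_measurable Mp" for t using QF0(3) unfolding q_def by blast
  have qint: "integrable Mp (\<lambda>\<omega>. real (q t \<omega> m s))" for t m s
  proof (rule integrable_const_bound[where B="real (3 ^ t * Amax)"])
    show "AE \<omega> in Mp. norm (real (q t \<omega> m s)) \<le> real (3 ^ t * Amax)"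
      by (rule AE_I2) (use QF2 in \<open>auto simp del: of_nat_mult of_nat_power\<close>)
  qed (use QF3 in auto)
  have Eq_nn: "0 \<le> integral\<^sup>L Mp (\<lambda>\<omega>. real (q t \<omega> m s))" for m s
    by (rule Bochner_Integration.integral_nonneg) auto
  have "integral\<^sup>L Mp (\<lambda>\<omega>. \<Sum>s\<in>{1..S}. real s * real (q t \<omega> m s))
      = (\<Sum>s\<in>{1..S}. real s * integral\<^sup>L Mp (\<lambda>\<omega>. real (q t \<omega> m s)))"
    using qint by (simp add: Bochner_Integration.integral_sum integrable_mult_right)
  also have "\<dots> \<le> (\<Sum>s\<in>{1..S}. real S * integral\<^sup>L Mp (\<lambda>\<omega>. real (q t \<omega> m s)))"
    by (intro sum_mono mult_right_mono Eq_nn) auto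
  also have "\<dots> = real S * (\<Sum>s\<in>{1..S}. integral\<^sup>L Mp (\<lambda>\<omega>. real (q t \<omega> m s)))"
    by (simp add: sum_distrib_left)
  also have "\<dots> \<le> real S * (\<Sum>m'<M. \<Sum>s\<in>{1..S}. integral\<^sup>L Mp (\<lambda>\<omega>. real (q t \<omega> m' s)))"
    by (intro mult_left_mono member_le_sum[where f="\<lambda>m'. \<Sum>s\<in>{1..S}. integral\<^sup>L Mp (\<lambda>\<omega>. real (q t \<omega> m' s))"])
      (use m Eq_nn in \<open>auto intro!: sum_nonneg\<close>)
  finally show ?thesis unfolding q_def .
qed




lemma avg_sum2:
  fixes g :: "nat \<Rightarrow> 'b \<Rightarrow> 'c \<Rightarrow> real"
  shows "(\<Sum>x\<in>A. \<Sum>y\<in>B. ((\<Sum>t\<in>I. g t x y) + h x y) / c * w x y)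
       = ((\<Sum>t\<in>I. \<Sum>x\<in>A. \<Sum>y\<in>B. g t x y * w x y) + (\<Sum>x\<in>A. \<Sum>y\<in>B. h x y * w x y)) / c"
proof -
  have "(\<Sum>x\<in>A. \<Sum>y\<in>B. ((\<Sum>t\<in>I. g t x y) + h x y) / c * w x y)
      = (\<Sum>x\<in>A. \<Sum>y\<in>B. ((\<Sum>t\<in>I. g t x y * w x y) + h x y * w x y) / c)"
    by (intro sum.cong refl) (simp add: sum_distrib_right sum_distrib_left algebra_simps)
  also have "\<dots> = ((\<Sum>x\<in>A. \<Sum>y\<in>B. \<Sum>t\<in>I. g t x y * w x y) + (\<Sum>x\<in>A. \<Sum>y\<in>B. h x y * w x y)) / c"
    by (simp add: sum_divide_distrib[symmetric] sum.distrib)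
  also have "(\<Sum>x\<in>A. \<Sum>y\<in>B. \<Sum>t\<in>I. g t x y * w x y) = (\<Sum>t\<in>I. \<Sum>x\<in>A. \<Sum>y\<in>B. g t x y * w x y)"
  proof -
    have "(\<Sum>x\<in>A. \<Sum>y\<in>B. \<Sum>t\<in>I. g t x y * w x y) = (\<Sum>x\<in>A. \<Sum>t\<in>I. \<Sum>y\<in>B. g t x y * w x y)"
      by (intro sum.cong refl) (rule sum.swap)
    also have "\<dots> = (\<Sum>t\<in>I. \<Sum>x\<in>A. \<Sum>y\<in>B. g t x y * w x y)" by (rule sum.swap)
    finally show ?thesis .
  qed
  finally show ?thesis .
qed

lemma avg_sum1:
  fixes g :: "nat \<Rightarrow> 'b \<Rightarrow> real"
  shows "(\<Sum>y\<in>B. ((\<Sum>t\<in>I. g t y) + h y) / c)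
       = ((\<Sum>t\<in>I. \<Sum>y\<in>B. g t y) + (\<Sum>y\<in>B. h y)) / c"
  by (simp add: sum_divide_distrib[symmetric] sum.distrib) (metis sum.swap)

lemma shift_idx:
  fixes f :: "nat \<Rightarrow> real"
  shows "(\<Sum>t\<in>{1..T}. f (t - 1)) + f T = (\<Sum>t\<in>{1..T}. f t) + f 0"
  by (induction T) (auto simp: algebra_simps)




theorem lemma1:
  fixes Mp :: "'a measure"
    and L M K S :: nat
    and C :: "nat \<Rightarrow> nat \<Rightarrow> real" and R :: "nat \<Rightarrow> nat \<Rightarrow> real"
    and c0 :: real and c :: "nat \<Rightarrow> real" and U V :: real
    and Amax :: nat and lam :: "nat \<Rightarrow> nat \<Rightarrow> real"
    and A :: "nat \<Rightarrow> 'a \<Rightarrow> jobconf"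
    and N :: "nat \<Rightarrow> nat \<Rightarrow> 'a \<Rightarrow> jobconf"
  assumes "prob_space Mp"
    and C_nonneg: "\<forall>l<L. \<forall>k<K. 0 \<le> C l k"
    and R_nonneg: "\<forall>m<M. \<forall>k<K. 0 \<le> R m k"
    and R_pos: "\<forall>m<M. \<exists>k<K. 0 < R m k"
    and "0 \<le> c0" and "\<forall>m<M. 0 \<le> c m" and "0 \<le> U" and "0 \<le> V"
    and A_meas: "\<forall>t. A t \<in> measurable Mp (count_space UNIV)"
    and A_indep: "prob_space.indep_vars Mp (\<lambda>_. count_space UNIV) A UNIV"
    and A_ident: "\<forall>t. distr Mp (count_space UNIV) (A t) = distr Mp (count_space UNIV) (A 0)"
    and A_support: "\<forall>t. \<forall>\<omega>\<in>space Mp. \<forall>m s. (M \<le> m \<or> s < 1 \<or> S < s) \<longrightarrow> A t \<omega> m s = 0"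
    and A_bound: "\<forall>t. \<forall>\<omega>\<in>space Mp. \<forall>m s. A t \<omega> m s \<le> Amax"
    and A_mean: "\<forall>t. \<forall>m<M. \<forall>s\<in>{1..S}.
                   prob_space.expectation Mp (\<lambda>\<omega>. real (A t \<omega> m s)) = lam m s"
    and A_zero: "\<forall>t. \<forall>m<M. \<forall>s\<in>{1..S}. 0 < measure Mp {\<omega>\<in>space Mp. A t \<omega> m s = 0}"
    and lam_cap: "lam \<in> capacity_region L M S K R C"
    and N_meas: "\<forall>l<L. \<forall>t. N l t \<in> measurable Mp (count_space UNIV)"
    and N_conf: "\<forall>l<L. \<forall>t. \<forall>\<omega>\<in>space Mp. N l t \<omega> \<in> Nset M S K R C l"
    and stable: "\<exists>q::real. (\<lambda>t. \<Sum>m<M. \<Sum>s\<in>{1..S}.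
                   prob_space.expectation Mp
                     (\<lambda>\<omega>. real (queue L (\<lambda>t'. A t' \<omega>) (\<lambda>l t'. N l t' \<omega>) t m s)))
                 \<longlonglongrightarrow> q"
  shows "liminf (\<lambda>T. ereal ((1 / real T) * (\<Sum>t\<in>{1..T}.
            prob_space.expectation Mp (\<lambda>\<omega>. \<Sum>l<L.
               V * cost1 c0 c M S (N l t \<omega>) + U * cost2 M S (N l (t - 1) \<omega>) (N l t \<omega>)))))
         \<ge> ereal (Copt L M S K R C c0 c V U lam)"
proof -
  interpret prob_space Mp by fact
  define Ns where "Ns = Nset M S K R C"
  note defs = Ns_def[symmetric]
  have finl: "finite (Ns l)" for l using finite_Nset[OF R_nonneg R_pos] by (simp add: Ns_def)
  have conf: "N l t \<omega> \<in> Ns l" if "l < L" "\<omega> \<in> space Mp" for l t \<omega> using N_conf that defs by auto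
  have ev1: "{\<omega> \<in> space Mp. N l t \<omega> = x} \<in> sets Mp" if "l < L" for l t x
  proof -
    have "{\<omega>\<in>space Mp. N l t \<omega> = x} = N l t -` {x} \<inter> space Mp" by auto
    also have "\<dots> \<in> sets Mp" by (rule measurable_sets[OF N_meas[rule_format, OF that]]) simp
    finally show ?thesis .
  qed
  define pp where "pp = (\<lambda>l t1 t2 x y. measure Mp {\<omega>\<in>space Mp. N l t1 \<omega> = x \<and> N l t2 \<omega> = y})"
  have pp_nn: "0 \<le> pp l t1 t2 x y" for l t1 t2 x y unfolding pp_def by simp
  have pp_le1: "pp l t1 t2 x y \<le> 1" for l t1 t2 x y unfolding pp_def by simp
  have EP: "\<And>l t1 t2 (g :: jobconf \<Rightarrow> jobconf \<Rightarrow> real). l < L \<Longrightarrow> integrable Mp (\<lambda>\<omega>. g (N l t1 \<omega>) (N l t2 \<omega>)) \<and>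
     integral\<^sup>L Mp (\<lambda>\<omega>. g (N l t1 \<omega>) (N l t2 \<omega>)) = (\<Sum>x\<in>Ns l. \<Sum>y\<in>Ns l. g x y * pp l t1 t2 x y)"
  proof -
    fix l t1 t2 and g :: "jobconf \<Rightarrow> jobconf \<Rightarrow> real" assume that: "l < L"
    have fm: "finite_measure Mp" by (rule finite_measure_axioms)
    have h1: "\<forall>\<omega>\<in>space Mp. (N l t1 \<omega>, N l t2 \<omega>) \<in> Ns l \<times> Ns l" using conf that by auto
    have h2: "\<forall>p\<in>Ns l \<times> Ns l. {\<omega>\<in>space Mp. (N l t1 \<omega>, N l t2 \<omega>) = p} \<in> sets Mp"
    proof
      fix p assume p: "p \<in> Ns l \<times> Ns l"
      have "{\<omega>\<in>space Mp. (N l t1 \<omega>, N l t2 \<omega>) = p} = {\<omega>\<in>space Mp. N l t1 \<omega> = fst p} \<inter> {\<omega>\<in>space Mp. N l t2 \<omega> = snd p}"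
        by (cases p) auto
      then show "{\<omega>\<in>space Mp. (N l t1 \<omega>, N l t2 \<omega>) = p} \<in> sets Mp" using ev1[OF that] by (simp add: sets.Int)
    qed
    note E = exp_finite[OF fm finite_cartesian_product[OF finl finl] h1 h2, of "\<lambda>p. g (fst p) (snd p)"]
    have "(\<Sum>p\<in>Ns l \<times> Ns l. g (fst p) (snd p) * measure Mp {\<omega>\<in>space Mp. (N l t1 \<omega>, N l t2 \<omega>) = p})
        = (\<Sum>x\<in>Ns l. \<Sum>y\<in>Ns l. g x y * pp l t1 t2 x y)"
      by (simp add: sum.cartesian_product pp_def split_def prod_eq_iff)
    then show "integrable Mp (\<lambda>\<omega>. g (N l t1 \<omega>) (N l t2 \<omega>)) \<and>
     integral\<^sup>L Mp (\<lambda>\<omega>. g (N l t1 \<omega>) (N l t2 \<omega>)) = (\<Sum>x\<in>Ns l. \<Sum>y\<in>Ns l. g x y * pp l t1 t2 x y)" using E by simp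
  qed
  have EP1: "(\<Sum>x\<in>Ns l. \<Sum>y\<in>Ns l. pp l t1 t2 x y) = 1" if "l < L" for l t1 t2
    using EP[of l "\<lambda>_ _. 1" t1 t2, OF that] prob_space by simp
  define marg where "marg = (\<lambda>l t x. integral\<^sup>L Mp (\<lambda>\<omega>. if N l t \<omega> = x then 1 else 0 :: real))"
  have M1: "(\<Sum>y\<in>Ns l. pp l t1 t2 x y) = marg l t1 x" if "l < L" "x \<in> Ns l" for l t1 t2 x
  proof -
    have "marg l t1 x = (\<Sum>a\<in>Ns l. \<Sum>b\<in>Ns l. (if a = x then 1 else 0) * pp l t1 t2 a b)"
      unfolding marg_def using EP[of l "\<lambda>a b. if a = x then 1 else 0" t1 t2, OF that(1)] by simp
    also have "\<dots> = (\<Sum>a\<in>Ns l. if a = x then (\<Sum>b\<in>Ns l. pp l t1 t2 a b) else 0)"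
      by (intro sum.cong refl) auto
    also have "\<dots> = (\<Sum>b\<in>Ns l. pp l t1 t2 x b)" using that finl by (simp add: sum.delta')
    finally show ?thesis by simp
  qed
  have M2: "(\<Sum>y\<in>Ns l. pp l t1 t2 y x) = marg l t2 x" if "l < L" "x \<in> Ns l" for l t1 t2 x
  proof -
    have "marg l t2 x = (\<Sum>a\<in>Ns l. \<Sum>b\<in>Ns l. (if b = x then 1 else 0) * pp l t1 t2 a b)"
      unfolding marg_def using EP[of l "\<lambda>a b. if b = x then 1 else 0" t1 t2, OF that(1)] by simp
    also have "\<dots> = (\<Sum>a\<in>Ns l. pp l t1 t2 a x)"
    proof (intro sum.cong refl)
      fix a
      have "(\<Sum>b\<in>Ns l. (if b = x then 1 else 0) * pp l t1 t2 a b) = (\<Sum>b\<in>Ns l. if b = x then pp l t1 t2 a b else 0)"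
        by (intro sum.cong refl) auto
      also have "\<dots> = pp l t1 t2 a x" using that finl by (simp add: sum.delta')
      finally show "(\<Sum>b\<in>Ns l. (if b = x then 1 else 0) * pp l t1 t2 a b) = pp l t1 t2 a x" .
    qed
    finally show ?thesis by simp
  qed
  define mu where "mu = (\<lambda>T l x y. ((\<Sum>t\<in>{1..T}. pp l (t - 1) t x y) + pp l T 0 x y) / (real T + 1))"
  have mu_nn: "\<forall>T. \<forall>l<L. \<forall>N\<in>Ns l. \<forall>N'\<in>Ns l. 0 \<le> mu T l N N'"
    unfolding mu_def using pp_nn by (auto intro!: divide_nonneg_nonneg add_nonneg_nonneg sum_nonneg)
  have mu_sum1: "\<forall>T. \<forall>l<L. (\<Sum>N\<in>Ns l. \<Sum>N'\<in>Ns l. mu T l N N') = 1"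
  proof (intro allI impI)
    fix T l assume l: "l < L"
    have "(\<Sum>N\<in>Ns l. \<Sum>N'\<in>Ns l. mu T l N N') =
        (\<Sum>x\<in>Ns l. \<Sum>y\<in>Ns l. ((\<Sum>t\<in>{1..T}. pp l (t - 1) t x y) + pp l T 0 x y) / (real T + 1) * 1)"
      unfolding mu_def by simp
    also have "\<dots> = ((\<Sum>t\<in>{1..T}. \<Sum>x\<in>Ns l. \<Sum>y\<in>Ns l. pp l (t - 1) t x y * 1) + (\<Sum>x\<in>Ns l. \<Sum>y\<in>Ns l. pp l T 0 x y * 1)) / (real T + 1)"
      by (rule avg_sum2)
    also have "\<dots> = 1" using EP1[OF l] by (simp add: add.commute)
    finally show "(\<Sum>N\<in>Ns l. \<Sum>N'\<in>Ns l. mu T l N N') = 1" .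
  qed
  have mu_stat: "\<forall>T. \<forall>l<L. \<forall>N\<in>Ns l. (\<Sum>N'\<in>Ns l. mu T l N' N) = (\<Sum>N'\<in>Ns l. mu T l N N')"
  proof (intro allI impI ballI)
    fix T l x assume l: "l < L" and x: "x \<in> Ns l"
    have "(\<Sum>y\<in>Ns l. mu T l y x) = ((\<Sum>t\<in>{1..T}. \<Sum>y\<in>Ns l. pp l (t - 1) t y x) + (\<Sum>y\<in>Ns l. pp l T 0 y x)) / (real T + 1)"
      unfolding mu_def by (rule avg_sum1)
    also have "\<dots> = ((\<Sum>t\<in>{1..T}. marg l t x) + marg l 0 x) / (real T + 1)"
      using M2[OF l x] by simp
    also have "\<dots> = ((\<Sum>t\<in>{1..T}. marg l (t - 1) x) + marg l T x) / (real T + 1)"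
      using shift_idx[of "\<lambda>t. marg l t x" T] by simp
    also have "\<dots> = ((\<Sum>t\<in>{1..T}. \<Sum>y\<in>Ns l. pp l (t - 1) t x y) + (\<Sum>y\<in>Ns l. pp l T 0 x y)) / (real T + 1)"
      using M1[OF l x] by simp
    also have "\<dots> = (\<Sum>y\<in>Ns l. mu T l x y)"
      unfolding mu_def by (rule avg_sum1[symmetric])
    finally show "(\<Sum>y\<in>Ns l. mu T l y x) = (\<Sum>y\<in>Ns l. mu T l x y)" .
  qed
  obtain q0 where q0: "(\<lambda>t. \<Sum>m<M. \<Sum>s\<in>{1..S}. integral\<^sup>L Mp
        (\<lambda>\<omega>. real (queue L (\<lambda>t'. A t' \<omega>) (\<lambda>l t'. N l t' \<omega>) t m s))) \<longlonglongrightarrow> q0"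
    using stable by blast
  obtain Kq where Kq: "\<forall>t. norm (\<Sum>m<M. \<Sum>s\<in>{1..S}. integral\<^sup>L Mp
        (\<lambda>\<omega>. real (queue L (\<lambda>t'. A t' \<omega>) (\<lambda>l t'. N l t' \<omega>) t m s))) \<le> Kq"
    using convergent_imp_Bseq[OF convergentI[OF q0]] by (auto elim!: BseqE)
  have mu_cap: "\<forall>T. \<forall>m<M. (\<Sum>s\<in>{1..S}. real s * lam m s) - real S * Kq / (real T + 1) \<le>
        (\<Sum>l<L. \<Sum>x\<in>Ns l. \<Sum>y\<in>Ns l. mu T l x y * real (\<Sum>s\<in>{1..S}. x m s))"
  proof (intro allI impI)
    fix T m assume m: "m < M"
    define capv where "capv = (\<lambda>x::jobconf. real (\<Sum>s\<in>{1..S}. x m s))"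
    define El where "El = (\<lambda>l t. integral\<^sup>L Mp (\<lambda>\<omega>. real (\<Sum>s\<in>{1..S}. N l t \<omega> m s)))"
    define capE where "capE = (\<lambda>t. integral\<^sup>L Mp (\<lambda>\<omega>. \<Sum>l<L. real (\<Sum>s\<in>{1..S}. N l t \<omega> m s)))"
    have capl: "(\<Sum>x\<in>Ns l. \<Sum>y\<in>Ns l. pp l t1 t2 x y * capv x) = El l t1" if "l < L" for l t1 t2
      using EP[of l "\<lambda>a b. capv a" t1 t2, OF that] by (simp add: El_def capv_def mult.commute)
    have capint: "\<forall>t. integrable Mp (\<lambda>\<omega>. \<Sum>l<L. real (\<Sum>s\<in>{1..S}. N l t \<omega> m s))"
    proof
      fix t
      show "integrable Mp (\<lambda>\<omega>. \<Sum>l<L. real (\<Sum>s\<in>{1..S}. N l t \<omega> m s))"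
      proof (rule Bochner_Integration.integrable_sum)
        fix l assume "l \<in> {..<L}"
        then show "integrable Mp (\<lambda>\<omega>. real (\<Sum>s\<in>{1..S}. N l t \<omega> m s))"
          using EP[of l "\<lambda>a b. real (\<Sum>s\<in>{1..S}. a m s)" t t] by simp
      qed
    qed
    have capE_eq: "capE t = (\<Sum>l<L. El l t)" for t
    proof -
      have "capE t = (\<Sum>l<L. integral\<^sup>L Mp (\<lambda>\<omega>. real (\<Sum>s\<in>{1..S}. N l t \<omega> m s)))"
        unfolding capE_def
      proof (rule Bochner_Integration.integral_sum)
        fix l assume "l \<in> {..<L}"
        then show "integrable Mp (\<lambda>\<omega>. real (\<Sum>s\<in>{1..S}. N l t \<omega> m s))"
          using EP[of l "\<lambda>a b. real (\<Sum>s\<in>{1..S}. a m s)" t t] by simp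
      qed
      then show ?thesis by (simp add: El_def)
    qed
    have "(\<Sum>l<L. \<Sum>x\<in>Ns l. \<Sum>y\<in>Ns l. mu T l x y * capv x)
        = (\<Sum>l<L. ((\<Sum>t\<in>{1..T}. El l (t - 1)) + El l T) / (real T + 1))"
    proof (intro sum.cong refl)
      fix l assume l: "l \<in> {..<L}"
      have "(\<Sum>x\<in>Ns l. \<Sum>y\<in>Ns l. mu T l x y * capv x) =
         ((\<Sum>t\<in>{1..T}. \<Sum>x\<in>Ns l. \<Sum>y\<in>Ns l. pp l (t - 1) t x y * capv x) + (\<Sum>x\<in>Ns l. \<Sum>y\<in>Ns l. pp l T 0 x y * capv x)) / (real T + 1)"
        unfolding mu_def by (rule avg_sum2)
      also have "\<dots> = ((\<Sum>t\<in>{1..T}. El l (t - 1)) + El l T) / (real T + 1)"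
        using capl l by simp
      finally show "(\<Sum>x\<in>Ns l. \<Sum>y\<in>Ns l. mu T l x y * capv x) = ((\<Sum>t\<in>{1..T}. El l (t - 1)) + El l T) / (real T + 1)" .
    qed
    also have "\<dots> = ((\<Sum>t\<in>{1..T}. \<Sum>l<L. El l (t - 1)) + (\<Sum>l<L. El l T)) / (real T + 1)"
      by (rule avg_sum1)
    also have "\<dots> = ((\<Sum>t\<in>{1..T}. capE (t - 1)) + capE T) / (real T + 1)"
      by (simp add: capE_eq)
    finally have eq: "(\<Sum>l<L. \<Sum>x\<in>Ns l. \<Sum>y\<in>Ns l. mu T l x y * capv x) = ((\<Sum>t\<in>{1..T}. capE (t - 1)) + capE T) / (real T + 1)" .
    have QW: "real (T+1) * (\<Sum>s\<in>{1..S}. real s * lam m s) - integral\<^sup>L Mp (\<lambda>\<omega>. \<Sum>s\<in>{1..S}. real s * real (queue L (\<lambda>t'. A t' \<omega>) (\<lambda>l t'. N l t' \<omega>) (T+1) m s))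
          \<le> (\<Sum>t\<in>{1..T}. capE (t - 1)) + capE T"
      using queue_work[OF assms(1) A_meas A_support A_bound A_mean N_meas capint m, of T] unfolding capE_def by simp
    have QE: "integral\<^sup>L Mp (\<lambda>\<omega>. \<Sum>s\<in>{1..S}. real s * real (queue L (\<lambda>t'. A t' \<omega>) (\<lambda>l t'. N l t' \<omega>) (T+1) m s))
          \<le> real S * Kq"
    proof -
      note queue_EW[OF assms(1) A_meas A_support A_bound N_meas m, of "T+1"]
      also have "real S * (\<Sum>m'<M. \<Sum>s\<in>{1..S}. integral\<^sup>L Mp (\<lambda>\<omega>. real (queue L (\<lambda>t'. A t' \<omega>) (\<lambda>l t'. N l t' \<omega>) (T+1) m' s))) \<le> real S * Kq"
        using Kq[rule_format, of "T+1"] by (intro mult_left_mono) auto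
      finally show ?thesis .
    qed
    have "(real T + 1) * ((\<Sum>s\<in>{1..S}. real s * lam m s) - real S * Kq / (real T + 1))
        = real (T+1) * (\<Sum>s\<in>{1..S}. real s * lam m s) - real S * Kq"
      by (simp add: field_simps)
    also have "\<dots> \<le> (\<Sum>t\<in>{1..T}. capE (t - 1)) + capE T" using QW QE by linarith
    finally have "(\<Sum>s\<in>{1..S}. real s * lam m s) - real S * Kq / (real T + 1) \<le> ((\<Sum>t\<in>{1..T}. capE (t - 1)) + capE T) / (real T + 1)"
      by (simp add: field_simps)
    then show "(\<Sum>s\<in>{1..S}. real s * lam m s) - real S * Kq / (real T + 1) \<le>
        (\<Sum>l<L. \<Sum>x\<in>Ns l. \<Sum>y\<in>Ns l. mu T l x y * real (\<Sum>s\<in>{1..S}. x m s))"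
      using eq by (simp add: capv_def)
  qed
  define gc where "gc = (\<lambda>x y. V * cost1 c0 c M S y + U * cost2 M S x y)"
  have gc_nn: "0 \<le> gc x y" for x y
  proof -
    have "0 \<le> cost1 c0 c M S y"
      unfolding cost1_def using assms(5,6) by (auto intro!: add_nonneg_nonneg sum_nonneg mult_nonneg_nonneg)
    moreover have "0 \<le> cost2 M S x y" unfolding cost2_def by (auto intro!: sum_nonneg)
    ultimately show ?thesis unfolding gc_def using assms(7,8) by simp
  qed
  define Hs where "Hs = (\<lambda>t. integral\<^sup>L Mp (\<lambda>\<omega>. \<Sum>l<L.
               V * cost1 c0 c M S (N l t \<omega>) + U * cost2 M S (N l (t - 1) \<omega>) (N l t \<omega>)))"
  define Z where "Z = (\<lambda>T. integral\<^sup>L Mp (\<lambda>\<omega>. \<Sum>l<L. gc (N l T \<omega>) (N l 0 \<omega>)))"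
  define a where "a = (\<lambda>T. (1 / real T) * (\<Sum>t\<in>{1..T}. Hs t))"
  define Bg where "Bg = (\<Sum>l<L. \<Sum>x\<in>Ns l. \<Sum>y\<in>Ns l. gc x y)"
  have Epair: "integral\<^sup>L Mp (\<lambda>\<omega>. \<Sum>l<L. gc (N l t1 \<omega>) (N l t2 \<omega>)) = (\<Sum>l<L. \<Sum>x\<in>Ns l. \<Sum>y\<in>Ns l. pp l t1 t2 x y * gc x y)" for t1 t2
  proof -
    have "integral\<^sup>L Mp (\<lambda>\<omega>. \<Sum>l<L. gc (N l t1 \<omega>) (N l t2 \<omega>)) = (\<Sum>l<L. integral\<^sup>L Mp (\<lambda>\<omega>. gc (N l t1 \<omega>) (N l t2 \<omega>)))"
    proof (rule Bochner_Integration.integral_sum)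
      fix l assume "l \<in> {..<L}"
      then show "integrable Mp (\<lambda>\<omega>. gc (N l t1 \<omega>) (N l t2 \<omega>))" using EP[of l gc t1 t2] by simp
    qed
    also have "\<dots> = (\<Sum>l<L. \<Sum>x\<in>Ns l. \<Sum>y\<in>Ns l. pp l t1 t2 x y * gc x y)"
      using EP[of _ gc t1 t2] by (intro sum.cong refl) (simp add: mult.commute)
    finally show ?thesis .
  qed
  have bnd: "0 \<le> (\<Sum>l<L. \<Sum>x\<in>Ns l. \<Sum>y\<in>Ns l. pp l t1 t2 x y * gc x y) \<and> (\<Sum>l<L. \<Sum>x\<in>Ns l. \<Sum>y\<in>Ns l. pp l t1 t2 x y * gc x y) \<le> Bg" for t1 t2
  proof
    show "0 \<le> (\<Sum>l<L. \<Sum>x\<in>Ns l. \<Sum>y\<in>Ns l. pp l t1 t2 x y * gc x y)"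
      using pp_nn gc_nn by (intro sum_nonneg mult_nonneg_nonneg) auto
    show "(\<Sum>l<L. \<Sum>x\<in>Ns l. \<Sum>y\<in>Ns l. pp l t1 t2 x y * gc x y) \<le> Bg"
      unfolding Bg_def using pp_le1 pp_nn gc_nn by (intro sum_mono mult_left_le_one_le) auto
  qed
  have Hs_eq: "Hs t = integral\<^sup>L Mp (\<lambda>\<omega>. \<Sum>l<L. gc (N l (t - 1) \<omega>) (N l t \<omega>))" for t
    unfolding Hs_def gc_def by simp
  have Hs_b: "0 \<le> Hs t \<and> Hs t \<le> Bg" for t using bnd Epair Hs_eq by simp
  have Z_b: "0 \<le> Z T \<and> Z T \<le> Bg" for T using bnd Epair unfolding Z_def by simp
  have Bg_nn: "0 \<le> Bg" using Z_b[of 0] by simp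
  have a_b: "\<forall>T. 0 \<le> a T \<and> a T \<le> Bg"
  proof
    fix T
    show "0 \<le> a T \<and> a T \<le> Bg"
    proof (cases "T = 0")
      case True then show ?thesis using Bg_nn by (simp add: a_def)
    next
      case False
      have s1: "(\<Sum>t\<in>{1..T}. Hs t) \<le> real T * Bg"
        using sum_mono[of "{1..T}" Hs "\<lambda>_. Bg"] Hs_b by simp
      have s0: "0 \<le> (\<Sum>t\<in>{1..T}. Hs t)" using Hs_b by (intro sum_nonneg) auto
      show ?thesis using False s1 s0 by (auto simp: a_def field_simps)
    qed
  qed
  have aT: "real T * a T = (\<Sum>t\<in>{1..T}. Hs t)" for T
    by (cases "T = 0") (auto simp: a_def)
  have cobj: "(\<Sum>l<L. \<Sum>x\<in>Ns l. \<Sum>y\<in>Ns l. mu T l x y * gc x y) = ((\<Sum>t\<in>{1..T}. Hs t) + Z T) / (real T + 1)" for T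
  proof -
    have "(\<Sum>l<L. \<Sum>x\<in>Ns l. \<Sum>y\<in>Ns l. mu T l x y * gc x y) =
        (\<Sum>l<L. ((\<Sum>t\<in>{1..T}. \<Sum>x\<in>Ns l. \<Sum>y\<in>Ns l. pp l (t - 1) t x y * gc x y) + (\<Sum>x\<in>Ns l. \<Sum>y\<in>Ns l. pp l T 0 x y * gc x y)) / (real T + 1))"
      unfolding mu_def by (intro sum.cong refl avg_sum2)
    also have "\<dots> = ((\<Sum>t\<in>{1..T}. \<Sum>l<L. \<Sum>x\<in>Ns l. \<Sum>y\<in>Ns l. pp l (t - 1) t x y * gc x y) + (\<Sum>l<L. \<Sum>x\<in>Ns l. \<Sum>y\<in>Ns l. pp l T 0 x y * gc x y)) / (real T + 1)"
      by (rule avg_sum1)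
    also have "\<dots> = ((\<Sum>t\<in>{1..T}. Hs t) + Z T) / (real T + 1)"
      by (simp add: Hs_eq Epair Z_def)
    finally show ?thesis .
  qed
  have conv: "(\<lambda>T. (\<Sum>l<L. \<Sum>x\<in>Ns l. \<Sum>y\<in>Ns l. mu T l x y * gc x y) - a T) \<longlonglongrightarrow> 0"
  proof (rule Lim_null_comparison)
    show "\<forall>\<^sub>F T in sequentially. norm ((\<Sum>l<L. \<Sum>x\<in>Ns l. \<Sum>y\<in>Ns l. mu T l x y * gc x y) - a T) \<le> Bg / (real T + 1)"
    proof (rule always_eventually, rule allI)
      fix T
      have "(\<Sum>l<L. \<Sum>x\<in>Ns l. \<Sum>y\<in>Ns l. mu T l x y * gc x y) - a T = (Z T - a T) / (real T + 1)"
        unfolding cobj aT[symmetric] by (simp add: field_simps)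
      moreover have "\<bar>Z T - a T\<bar> \<le> Bg" using Z_b[of T] a_b[rule_format, of T] by (auto simp: abs_le_iff)
      ultimately show "norm ((\<Sum>l<L. \<Sum>x\<in>Ns l. \<Sum>y\<in>Ns l. mu T l x y * gc x y) - a T) \<le> Bg / (real T + 1)"
        by (simp add: abs_divide divide_right_mono)
    qed
    show "(\<lambda>T. Bg / (real T + 1)) \<longlonglongrightarrow> 0"
      using tendsto_mult_right_zero[OF LIMSEQ_inverse_real_of_nat, of Bg]
      by (simp add: divide_inverse add.commute)
  qed
  have "liminf (\<lambda>T. ereal (a T)) \<ge> ereal (Copt L M S K R C c0 c V U lam)"
  proof (rule core[where mu=mu and Be="real S * Kq" and Ba=Bg])
    show "\<forall>l<L. finite (Nset M S K R C l)" using finl defs by simp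
    show "\<forall>T. \<forall>l<L. \<forall>N\<in>Nset M S K R C l. \<forall>N'\<in>Nset M S K R C l. 0 \<le> mu T l N N'" using mu_nn defs by simp
    show "\<forall>T. \<forall>l<L. (\<Sum>N\<in>Nset M S K R C l. \<Sum>N'\<in>Nset M S K R C l. mu T l N N') = 1" using mu_sum1 defs by simp
    show "\<forall>T. \<forall>l<L. \<forall>N\<in>Nset M S K R C l.
        (\<Sum>N'\<in>Nset M S K R C l. mu T l N' N) = (\<Sum>N'\<in>Nset M S K R C l. mu T l N N')" using mu_stat defs by simp
    show "\<forall>T. \<forall>m<M. (\<Sum>s\<in>{1..S}. real s * lam m s) - real S * Kq / (real T + 1) \<le>
        (\<Sum>l<L. \<Sum>N\<in>Nset M S K R C l. \<Sum>N'\<in>Nset M S K R C l. mu T l N N' * real (\<Sum>s\<in>{1..S}. N m s))"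
      using mu_cap defs by simp
    show "\<forall>m<M. \<forall>s\<in>{1..S}. 0 \<le> lam m s"
    proof (intro allI impI ballI)
      fix m s assume "m < M" "s \<in> {1..S}"
      then have "lam m s = integral\<^sup>L Mp (\<lambda>\<omega>. real (A 0 \<omega> m s))" using A_mean by simp
      also have "0 \<le> \<dots>" by (rule Bochner_Integration.integral_nonneg) simp
      finally show "0 \<le> lam m s" .
    qed
    show "0 \<le> c0" "\<forall>m<M. 0 \<le> c m" "0 \<le> U" "0 \<le> V" using assms(5-8) by auto
    show "(\<lambda>T. (\<Sum>l<L. \<Sum>N\<in>Nset M S K R C l. \<Sum>N'\<in>Nset M S K R C l.
                 mu T l N N' * (V * cost1 c0 c M S N' + U * cost2 M S N N')) - a T) \<longlonglongrightarrow> 0"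
      using conv defs by (simp add: gc_def)
    show "\<forall>T. 0 \<le> a T \<and> a T \<le> Bg" by (rule a_b)
  qed
  then show ?thesis unfolding a_def Hs_def .
qed


end
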